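(* Let $a<b$ be real numbers and let $h:[a,b]\to\mathbb{R}$ have a continuous first derivative that is uniformly bounded on $[a,b]$. For $n\ge2$ define $x_{i,n}=a+(b-a)\frac{i-1}{n-1}$, $i=1,\dots,n$. Let $\varepsilon_1,\varepsilon_2,\dots$ be i.i.d. random variables with a non-degenerate cdf $F_\varepsilon$, mean $0$ and finite variance, and put $Y_{i,n}=h(x_{i,n})+\varepsilon_i$. Define $$A_n=\frac{1}{\sqrt n}\sum_{i=2}^n\big(Y_{i,n}-Y_{i-1,n}\big)_+,\qquad B_n=\frac{1}{\sqrt n}\sum_{i=2}^n\big|Y_{i,n}-Y_{i-1,n}\big|,\qquad I_n=\frac{A_n}{B_n},$$ where $x_+=\max\{x,0\}$. Then $I_n\to 1/2$ in probability as $n\to\infty$. *)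

theory Defs
  imports "HOL-Probability.Probability"
begin

definition conv_in_prob :: "'a measure \<Rightarrow> (nat \<Rightarrow> 'a \<Rightarrow> real) \<Rightarrow> real \<Rightarrow> bool" where
  "conv_in_prob M X c \<longleftrightarrow>
     (\<forall>e>0. (\<lambda>n. measure M {\<omega> \<in> space M. \<bar>X n \<omega> - c\<bar> > e}) \<longlonglongrightarrow> 0)"

definition design_pt :: "real \<Rightarrow> real \<Rightarrow> nat \<Rightarrow> nat \<Rightarrow> real" where
  "design_pt a b n i = a + (b - a) * (real i - 1) / (real n - 1)"

definition pos_part :: "real \<Rightarrow> real" where
  "pos_part x = max x 0"

end

theory Submission
  imports Defs
begin

lemma sq_diff_le: "((x::real) - y)\<^sup>2 \<le> 2 * x\<^sup>2 + 2 * y\<^sup>2"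
proof -
  have "2 * x\<^sup>2 + 2 * y\<^sup>2 - (x - y)\<^sup>2 = (x + y)\<^sup>2" by (simp add: power2_eq_square algebra_simps)
  then show ?thesis using zero_le_power2[of "x+y"] by linarith
qed

lemma prod_le_sq: "2 * ((x::real) * y) \<le> x\<^sup>2 + y\<^sup>2"
proof -
  have "x\<^sup>2 + y\<^sup>2 - 2 * (x * y) = (x - y)\<^sup>2" by (simp add: power2_eq_square algebra_simps)
  then show ?thesis using zero_le_power2[of "x-y"] by linarith
qed

lemma abs_prod_le_sq: "\<bar>(x::real) * y\<bar> \<le> x\<^sup>2 + y\<^sup>2"
proof -
  have "2 * (\<bar>x\<bar> * \<bar>y\<bar>) \<le> \<bar>x\<bar>\<^sup>2 + \<bar>y\<bar>\<^sup>2" by (rule prod_le_sq)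
  moreover have "0 \<le> \<bar>x\<bar> * \<bar>y\<bar>" by simp
  moreover have "\<bar>x * y\<bar> = \<bar>x\<bar> * \<bar>y\<bar>" by (rule abs_mult)
  moreover have "\<bar>x\<bar>\<^sup>2 = x\<^sup>2" "\<bar>y\<bar>\<^sup>2 = y\<^sup>2" by simp_all
  ultimately show ?thesis by linarith
qed

locale iid_setting = prob_space M for M :: "'a measure" +
  fixes \<epsilon> :: "nat \<Rightarrow> 'a \<Rightarrow> real"
  assumes indep: "indep_vars (\<lambda>_. borel) \<epsilon> {1..}"
    and ident: "\<forall>i\<ge>1. distr M borel (\<epsilon> i) = distr M borel (\<epsilon> 1)"
    and int1: "integrable M (\<epsilon> 1)" and mean0: "(\<integral>\<omega>. \<epsilon> 1 \<omega> \<partial>M) = 0"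
    and int2: "integrable M (\<lambda>\<omega>. (\<epsilon> 1 \<omega>)\<^sup>2)"
    and nondeg: "\<not> (\<exists>c. AE \<omega> in M. \<epsilon> 1 \<omega> = c)"
begin

lemma meas: "i \<ge> 1 \<Longrightarrow> \<epsilon> i \<in> borel_measurable M"
  using indep unfolding indep_vars_def by auto

lemma indep2:
  assumes "i \<ge> 1" "j \<ge> 1" "i \<noteq> j"
  shows "indep_var borel (\<epsilon> i) borel (\<epsilon> j)"
proof -
  have "indep_var (PiM {i} (\<lambda>_. borel)) (\<lambda>\<omega>. restrict (\<lambda>k. \<epsilon> k \<omega>) {i})
                  (PiM {j} (\<lambda>_. borel)) (\<lambda>\<omega>. restrict (\<lambda>k. \<epsilon> k \<omega>) {j})"
    using assms by (intro indep_var_restrict[OF indep]) auto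
  from indep_var_compose[OF this measurable_component_singleton[of i "{i}" "\<lambda>_. borel"]
        measurable_component_singleton[of j "{j}" "\<lambda>_. borel"]]
  show ?thesis by (simp add: comp_def)
qed

definition "P = distr M borel (\<epsilon> 1)"

lemma pairdist:
  assumes "i \<ge> 1" "j \<ge> 1" "i \<noteq> j"
  shows "distr M (borel \<Otimes>\<^sub>M borel) (\<lambda>\<omega>. (\<epsilon> i \<omega>, \<epsilon> j \<omega>)) = P \<Otimes>\<^sub>M P"
proof -
  have "distr M borel (\<epsilon> i) \<Otimes>\<^sub>M distr M borel (\<epsilon> j) = distr M (borel \<Otimes>\<^sub>M borel) (\<lambda>\<omega>. (\<epsilon> i \<omega>, \<epsilon> j \<omega>))"
    using indep2[OF assms] unfolding indep_var_distribution_eq by blast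
  moreover have "distr M borel (\<epsilon> i) = P" "distr M borel (\<epsilon> j) = P"
    unfolding P_def using ident[rule_format, OF assms(1)] ident[rule_format, OF assms(2)] by auto
  ultimately show ?thesis by simp
qed

lemma pair_integral:
  fixes g :: "real \<times> real \<Rightarrow> real"
  assumes "i \<ge> 1" "j \<ge> 1" "i \<noteq> j" and g[measurable]: "g \<in> borel_measurable (borel \<Otimes>\<^sub>M borel)"
  shows "integrable M (\<lambda>\<omega>. g (\<epsilon> i \<omega>, \<epsilon> j \<omega>)) \<longleftrightarrow> integrable (P \<Otimes>\<^sub>M P) g"
    and "(\<integral>\<omega>. g (\<epsilon> i \<omega>, \<epsilon> j \<omega>) \<partial>M) = integral\<^sup>L (P \<Otimes>\<^sub>M P) g"
proof -
  have [measurable]: "\<epsilon> i \<in> borel_measurable M" "\<epsilon> j \<in> borel_measurable M" using meas assms by auto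
  have m: "(\<lambda>\<omega>. (\<epsilon> i \<omega>, \<epsilon> j \<omega>)) \<in> measurable M (borel \<Otimes>\<^sub>M borel)" by measurable
  show "integrable M (\<lambda>\<omega>. g (\<epsilon> i \<omega>, \<epsilon> j \<omega>)) \<longleftrightarrow> integrable (P \<Otimes>\<^sub>M P) g"
    using integrable_distr_eq[OF m g] pairdist[OF assms(1-3)] by simp
  show "(\<integral>\<omega>. g (\<epsilon> i \<omega>, \<epsilon> j \<omega>) \<partial>M) = integral\<^sup>L (P \<Otimes>\<^sub>M P) g"
    using integral_distr[OF m g] pairdist[OF assms(1-3)] by simp
qed

lemma single_integral:
  fixes f :: "real \<Rightarrow> real"
  assumes "i \<ge> 1" and f[measurable]: "f \<in> borel_measurable borel"
  shows "integrable M (\<lambda>\<omega>. f (\<epsilon> i \<omega>)) \<longleftrightarrow> integrable M (\<lambda>\<omega>. f (\<epsilon> 1 \<omega>))"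
    and "(\<integral>\<omega>. f (\<epsilon> i \<omega>) \<partial>M) = (\<integral>\<omega>. f (\<epsilon> 1 \<omega>) \<partial>M)"
proof -
  have [measurable]: "\<epsilon> i \<in> borel_measurable M" "\<epsilon> 1 \<in> borel_measurable M" using meas assms by auto
  show "integrable M (\<lambda>\<omega>. f (\<epsilon> i \<omega>)) \<longleftrightarrow> integrable M (\<lambda>\<omega>. f (\<epsilon> 1 \<omega>))"
  proof -
    have "integrable M (\<lambda>\<omega>. f (\<epsilon> i \<omega>)) = integrable (distr M borel (\<epsilon> i)) f"
      by (rule integrable_distr_eq[symmetric]) measurable
    also have "\<dots> = integrable (distr M borel (\<epsilon> 1)) f" using ident[rule_format, OF assms(1)] by (simp only:)
    also have "\<dots> = integrable M (\<lambda>\<omega>. f (\<epsilon> 1 \<omega>))"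
      by (rule integrable_distr_eq) measurable
    finally show ?thesis .
  qed
  show "(\<integral>\<omega>. f (\<epsilon> i \<omega>) \<partial>M) = (\<integral>\<omega>. f (\<epsilon> 1 \<omega>) \<partial>M)"
  proof -
    have "(\<integral>\<omega>. f (\<epsilon> i \<omega>) \<partial>M) = integral\<^sup>L (distr M borel (\<epsilon> i)) f"
      by (rule integral_distr[symmetric]) measurable
    also have "\<dots> = integral\<^sup>L (distr M borel (\<epsilon> 1)) f" using ident[rule_format, OF assms(1)] by (simp only:)
    also have "\<dots> = (\<integral>\<omega>. f (\<epsilon> 1 \<omega>) \<partial>M)"
      by (rule integral_distr) measurable
    finally show ?thesis .
  qed
qed

lemma int1i: "i \<ge> 1 \<Longrightarrow> integrable M (\<epsilon> i)"
  using single_integral(1)[of i "\<lambda>x. x"] int1 by auto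
lemma int2i: "i \<ge> 1 \<Longrightarrow> integrable M (\<lambda>\<omega>. (\<epsilon> i \<omega>)\<^sup>2)"
  using single_integral(1)[of i "\<lambda>x. x\<^sup>2"] int2 by auto
lemma mean0i: "i \<ge> 1 \<Longrightarrow> (\<integral>\<omega>. \<epsilon> i \<omega> \<partial>M) = 0"
  using single_integral(2)[of i "\<lambda>x. x"] mean0 by auto
lemma mom2i: "i \<ge> 1 \<Longrightarrow> (\<integral>\<omega>. (\<epsilon> i \<omega>)\<^sup>2 \<partial>M) = (\<integral>\<omega>. (\<epsilon> 1 \<omega>)\<^sup>2 \<partial>M)"
  using single_integral(2)[of i "\<lambda>x. x\<^sup>2"] by auto


definition "mu = integral\<^sup>L (P \<Otimes>\<^sub>M P) (\<lambda>p. \<bar>snd p - fst p\<bar>)"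
definition "v = integral\<^sup>L (P \<Otimes>\<^sub>M P) (\<lambda>p. (\<bar>snd p - fst p\<bar> - mu)\<^sup>2)"
definition "W i \<omega> = \<bar>\<epsilon> i \<omega> - \<epsilon> (i - 1) \<omega>\<bar> - mu"

lemma W_meas: "i \<ge> 2 \<Longrightarrow> W i \<in> borel_measurable M"
  unfolding W_def using meas[of i] meas[of "i-1"] by measurable

lemma intZ: "i \<ge> 2 \<Longrightarrow> integrable M (\<lambda>\<omega>. \<bar>\<epsilon> i \<omega> - \<epsilon> (i - 1) \<omega>\<bar>)"
  using int1i[of i] int1i[of "i-1"] by (intro integrable_abs Bochner_Integration.integrable_diff) auto

lemma intW: "i \<ge> 2 \<Longrightarrow> integrable M (W i)"
  unfolding W_def using intZ by auto

lemma intW2: "i \<ge> 2 \<Longrightarrow> integrable M (\<lambda>\<omega>. (W i \<omega>)\<^sup>2)"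
proof -
  assume i: "i \<ge> 2"
  show ?thesis
  proof (rule Bochner_Integration.integrable_bound)
    show "integrable M (\<lambda>\<omega>. 4 * (\<epsilon> i \<omega>)\<^sup>2 + 4 * (\<epsilon> (i-1) \<omega>)\<^sup>2 + 2 * mu\<^sup>2)"
      using int2i[of i] int2i[of "i-1"] i by auto
    show "(\<lambda>\<omega>. (W i \<omega>)\<^sup>2) \<in> borel_measurable M" using W_meas[OF i] by measurable
    show "AE \<omega> in M. norm ((W i \<omega>)\<^sup>2) \<le> norm (4 * (\<epsilon> i \<omega>)\<^sup>2 + 4 * (\<epsilon> (i-1) \<omega>)\<^sup>2 + 2 * mu\<^sup>2)"
    proof (intro AE_I2)
      fix \<omega>
      have "(W i \<omega>)\<^sup>2 \<le> 2 * (\<epsilon> i \<omega> - \<epsilon> (i - 1) \<omega>)\<^sup>2 + 2 * mu\<^sup>2"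
        unfolding W_def using sq_diff_le[of "\<bar>\<epsilon> i \<omega> - \<epsilon> (i - 1) \<omega>\<bar>" mu] by simp
      also have "\<dots> \<le> 4 * (\<epsilon> i \<omega>)\<^sup>2 + 4 * (\<epsilon> (i-1) \<omega>)\<^sup>2 + 2 * mu\<^sup>2"
        using sq_diff_le[of "\<epsilon> i \<omega>" "\<epsilon> (i - 1) \<omega>"] by linarith
      finally show "norm ((W i \<omega>)\<^sup>2) \<le> norm (4 * (\<epsilon> i \<omega>)\<^sup>2 + 4 * (\<epsilon> (i-1) \<omega>)\<^sup>2 + 2 * mu\<^sup>2)"
        by simp
    qed
  qed
qed

lemma EZ: "i \<ge> 2 \<Longrightarrow> (\<integral>\<omega>. \<bar>\<epsilon> i \<omega> - \<epsilon> (i - 1) \<omega>\<bar> \<partial>M) = mu"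
proof -
  assume i: "i \<ge> 2"
  have m: "(\<lambda>p. \<bar>snd p - fst p\<bar>) \<in> borel_measurable (borel \<Otimes>\<^sub>M (borel::real measure))" by measurable
  have "i - 1 \<ge> 1" "i \<ge> 1" "i - 1 \<noteq> i" using i by auto
  from pair_integral(2)[OF this m] show ?thesis unfolding mu_def by simp
qed

lemma EW: "i \<ge> 2 \<Longrightarrow> (\<integral>\<omega>. W i \<omega> \<partial>M) = 0"
proof -
  assume i: "i \<ge> 2"
  have "(\<integral>\<omega>. W i \<omega> \<partial>M) = (\<integral>\<omega>. \<bar>\<epsilon> i \<omega> - \<epsilon> (i - 1) \<omega>\<bar> \<partial>M) - (\<integral>\<omega>. mu \<partial>M)"
    unfolding W_def using intZ[OF i] by (rule Bochner_Integration.integral_diff) simp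
  then show ?thesis using EZ[OF i] by (simp add: prob_space)
qed

lemma EW2: "i \<ge> 2 \<Longrightarrow> (\<integral>\<omega>. (W i \<omega>)\<^sup>2 \<partial>M) = v"
proof -
  assume i: "i \<ge> 2"
  have m: "(\<lambda>p. (\<bar>snd p - fst p\<bar> - mu)\<^sup>2) \<in> borel_measurable (borel \<Otimes>\<^sub>M (borel::real measure))" by measurable
  have "i - 1 \<ge> 1" "i \<ge> 1" "i - 1 \<noteq> i" using i by auto
  from pair_integral(2)[OF this m] show ?thesis unfolding v_def W_def by simp
qed

lemma v_nonneg: "v \<ge> 0"
proof -
  have "0 \<le> (\<integral>\<omega>. (W 2 \<omega>)\<^sup>2 \<partial>M)" by (rule integral_nonneg_AE) simp
  then show ?thesis using EW2[of 2] by simp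
qed

lemma W_indep:
  assumes "i \<ge> 2" "j \<ge> 2" "i + 1 < j"
  shows "(\<integral>\<omega>. W i \<omega> * W j \<omega> \<partial>M) = 0"
proof -
  have "indep_var (PiM {i-1,i} (\<lambda>_. borel)) (\<lambda>\<omega>. restrict (\<lambda>k. \<epsilon> k \<omega>) {i-1,i})
                  (PiM {j-1,j} (\<lambda>_. borel)) (\<lambda>\<omega>. restrict (\<lambda>k. \<epsilon> k \<omega>) {j-1,j})"
    using assms by (intro indep_var_restrict[OF indep]) auto
  moreover have "(\<lambda>f. \<bar>f i - f (i-1)\<bar> - mu) \<in> borel_measurable (PiM {i-1,i} (\<lambda>_. borel))"
    by measurable
  moreover have "(\<lambda>f. \<bar>f j - f (j-1)\<bar> - mu) \<in> borel_measurable (PiM {j-1,j} (\<lambda>_. borel))"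
    by measurable
  ultimately have "indep_var borel ((\<lambda>f. \<bar>f i - f (i-1)\<bar> - mu) \<circ> (\<lambda>\<omega>. restrict (\<lambda>k. \<epsilon> k \<omega>) {i-1,i}))
      borel ((\<lambda>f. \<bar>f j - f (j-1)\<bar> - mu) \<circ> (\<lambda>\<omega>. restrict (\<lambda>k. \<epsilon> k \<omega>) {j-1,j}))"
    by (rule indep_var_compose)
  also have "((\<lambda>f. \<bar>f i - f (i-1)\<bar> - mu) \<circ> (\<lambda>\<omega>. restrict (\<lambda>k. \<epsilon> k \<omega>) {i-1,i})) = W i"
    by (auto simp: W_def fun_eq_iff)
  also have "((\<lambda>f. \<bar>f j - f (j-1)\<bar> - mu) \<circ> (\<lambda>\<omega>. restrict (\<lambda>k. \<epsilon> k \<omega>) {j-1,j})) = W j"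
    by (auto simp: W_def fun_eq_iff)
  finally have ind: "indep_var borel (W i) borel (W j)" .
  have "(\<integral>\<omega>. W i \<omega> * W j \<omega> \<partial>M) = (\<integral>\<omega>. W i \<omega> \<partial>M) * (\<integral>\<omega>. W j \<omega> \<partial>M)"
    by (rule indep_var_lebesgue_integral[OF ind intW[OF assms(1)] intW[OF assms(2)]])
  then show ?thesis by (simp add: EW[OF assms(1)])
qed

lemma W_prod_int: "i \<ge> 2 \<Longrightarrow> j \<ge> 2 \<Longrightarrow> integrable M (\<lambda>\<omega>. W i \<omega> * W j \<omega>)"
proof (rule Bochner_Integration.integrable_bound)
  assume i: "i \<ge> 2" and j: "j \<ge> 2"
  show "integrable M (\<lambda>\<omega>. (W i \<omega>)\<^sup>2 + (W j \<omega>)\<^sup>2)" using intW2 i j by auto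
  show "(\<lambda>\<omega>. W i \<omega> * W j \<omega>) \<in> borel_measurable M" using W_meas i j by measurable
  show "AE \<omega> in M. norm (W i \<omega> * W j \<omega>) \<le> norm ((W i \<omega>)\<^sup>2 + (W j \<omega>)\<^sup>2)"
  proof (intro AE_I2)
    fix \<omega>
    have "\<bar>W i \<omega> * W j \<omega>\<bar> \<le> (W i \<omega>)\<^sup>2 + (W j \<omega>)\<^sup>2" by (rule abs_prod_le_sq)
    then show "norm (W i \<omega> * W j \<omega>) \<le> norm ((W i \<omega>)\<^sup>2 + (W j \<omega>)\<^sup>2)" by simp
  qed
qed

lemma W_prod_le: "i \<ge> 2 \<Longrightarrow> j \<ge> 2 \<Longrightarrow> (\<integral>\<omega>. W i \<omega> * W j \<omega> \<partial>M) \<le> v"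
proof -
  assume i: "i \<ge> 2" and j: "j \<ge> 2"
  have "(\<integral>\<omega>. W i \<omega> * W j \<omega> \<partial>M) \<le> (\<integral>\<omega>. ((W i \<omega>)\<^sup>2 + (W j \<omega>)\<^sup>2) / 2 \<partial>M)"
  proof (rule integral_mono)
    show "integrable M (\<lambda>\<omega>. W i \<omega> * W j \<omega>)" by (rule W_prod_int[OF i j])
    show "integrable M (\<lambda>\<omega>. ((W i \<omega>)\<^sup>2 + (W j \<omega>)\<^sup>2) / 2)"
      using intW2[OF i] intW2[OF j] by simp
    fix \<omega> show "W i \<omega> * W j \<omega> \<le> ((W i \<omega>)\<^sup>2 + (W j \<omega>)\<^sup>2) / 2"
      using prod_le_sq[of "W i \<omega>" "W j \<omega>"] by simp
  qed
  also have "\<dots> = ((\<integral>\<omega>. (W i \<omega>)\<^sup>2 \<partial>M) + (\<integral>\<omega>. (W j \<omega>)\<^sup>2 \<partial>M)) / 2"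
    using intW2[OF i] intW2[OF j] by simp
  also have "\<dots> = v" by (simp add: EW2[OF i] EW2[OF j])
  finally show ?thesis .
qed

end

context iid_setting begin

definition "sigma2 = (\<integral>\<omega>. (\<epsilon> 1 \<omega>)\<^sup>2 \<partial>M)"

lemma sum_sq_expand:
  "(\<Sum>i\<in>I. W i \<omega>)\<^sup>2 = (\<Sum>i\<in>I. \<Sum>j\<in>I. W i \<omega> * W j \<omega>)"
  by (simp add: power2_eq_square sum_product)

lemma E_row:
  assumes i: "i \<ge> 2" and I: "I \<subseteq> {2..}" "finite I"
  shows "(\<Sum>j\<in>I. (\<integral>\<omega>. W i \<omega> * W j \<omega> \<partial>M)) \<le> 3 * v"
proof -
  have "(\<Sum>j\<in>I. (\<integral>\<omega>. W i \<omega> * W j \<omega> \<partial>M)) \<le> (\<Sum>j\<in>I. if j \<in> {i-1..i+1} then v else 0)"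
  proof (rule sum_mono)
    fix j assume j: "j \<in> I"
    then have j2: "j \<ge> 2" using I by auto
    show "(\<integral>\<omega>. W i \<omega> * W j \<omega> \<partial>M) \<le> (if j \<in> {i-1..i+1} then v else 0)"
    proof (cases "j \<in> {i-1..i+1}")
      case True then show ?thesis using W_prod_le[OF i j2] by simp
    next
      case False
      then consider "i + 1 < j" | "j + 1 < i" by fastforce
      then show ?thesis
      proof cases
        case 1 then show ?thesis using W_indep[OF i j2] False by simp
      next
        case 2
        have "(\<integral>\<omega>. W i \<omega> * W j \<omega> \<partial>M) = (\<integral>\<omega>. W j \<omega> * W i \<omega> \<partial>M)"
          by (simp add: mult.commute)
        then show ?thesis using W_indep[OF j2 i 2] False by (simp add: v_nonneg)
      qed
    qed
  qed
  also have "\<dots> = (\<Sum>j\<in>{x\<in>I. x \<in> {i-1..i+1}}. v)"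
    by (rule sum.inter_filter[symmetric]) (rule I(2))
  also have "\<dots> \<le> (\<Sum>j\<in>{i-1..i+1}. v)"
    by (rule sum_mono2) (auto simp: v_nonneg)
  also have "\<dots> = 3 * v" using i by simp
  finally show ?thesis .
qed

lemma Ssq_int:
  assumes "I \<subseteq> {2..}" "finite I"
  shows "integrable M (\<lambda>\<omega>. (\<Sum>i\<in>I. W i \<omega>)\<^sup>2)"
  unfolding sum_sq_expand
  using assms by (intro Bochner_Integration.integrable_sum W_prod_int) auto

lemma Ssq_bound:
  assumes I: "I \<subseteq> {2..}" "finite I"
  shows "(\<integral>\<omega>. (\<Sum>i\<in>I. W i \<omega>)\<^sup>2 \<partial>M) \<le> 3 * v * card I"
proof -
  have "(\<integral>\<omega>. (\<Sum>i\<in>I. W i \<omega>)\<^sup>2 \<partial>M) = (\<Sum>i\<in>I. \<integral>\<omega>. (\<Sum>j\<in>I. W i \<omega> * W j \<omega>) \<partial>M)"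
    unfolding sum_sq_expand using I
    by (intro Bochner_Integration.integral_sum Bochner_Integration.integrable_sum W_prod_int) auto
  also have "\<dots> = (\<Sum>i\<in>I. \<Sum>j\<in>I. \<integral>\<omega>. W i \<omega> * W j \<omega> \<partial>M)"
    using I by (intro sum.cong refl Bochner_Integration.integral_sum W_prod_int) auto
  also have "\<dots> \<le> (\<Sum>i\<in>I. 3 * v)"
    using I by (intro sum_mono E_row) auto
  also have "\<dots> = 3 * v * card I" by simp
  finally show ?thesis .
qed

lemma S_meas: "I \<subseteq> {2..} \<Longrightarrow> (\<lambda>\<omega>. \<Sum>i\<in>I. W i \<omega>) \<in> borel_measurable M"
  by (rule borel_measurable_sum) (use W_meas in auto)

lemma S_tail:
  assumes I: "I \<subseteq> {2..}" "finite I" and t: "t > 0"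
  shows "measure M {\<omega>\<in>space M. t \<le> \<bar>\<Sum>i\<in>I. W i \<omega>\<bar>} \<le> 3 * v * card I / t\<^sup>2"
proof -
  have "{\<omega>\<in>space M. t \<le> \<bar>\<Sum>i\<in>I. W i \<omega>\<bar>} = {\<omega>\<in>space M. t\<^sup>2 \<le> (\<Sum>i\<in>I. W i \<omega>)\<^sup>2}"
    using t by (auto simp: abs_le_square_iff[symmetric])
  also have "measure M \<dots> \<le> (\<integral>\<omega>. (\<Sum>i\<in>I. W i \<omega>)\<^sup>2 \<partial>M) / t\<^sup>2"
    by (rule integral_Markov_inequality_measure[OF Ssq_int[OF I] sets.top]) (use t in auto)
  also have "\<dots> \<le> 3 * v * card I / t\<^sup>2"
    using Ssq_bound[OF I] t by (simp add: divide_right_mono)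
  finally show ?thesis .
qed

lemma eps_tail:
  assumes i: "i \<ge> 1" and s: "s > 0"
  shows "measure M {\<omega>\<in>space M. s \<le> \<bar>\<epsilon> i \<omega>\<bar>} \<le> sigma2 / s\<^sup>2"
proof -
  have "{\<omega>\<in>space M. s \<le> \<bar>\<epsilon> i \<omega>\<bar>} = {\<omega>\<in>space M. s\<^sup>2 \<le> (\<epsilon> i \<omega>)\<^sup>2}"
    using s by (auto simp: abs_le_square_iff[symmetric])
  also have "measure M \<dots> \<le> (\<integral>\<omega>. (\<epsilon> i \<omega>)\<^sup>2 \<partial>M) / s\<^sup>2"
    by (rule integral_Markov_inequality_measure[OF int2i[OF i] sets.top]) (use s in auto)
  also have "\<dots> = sigma2 / s\<^sup>2" using mom2i[OF i] unfolding sigma2_def by simp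
  finally show ?thesis .
qed

lemma mu_pos: "mu > 0"
proof (rule ccontr)
  assume n: "\<not> mu > 0"
  have a: "0 \<le> (\<integral>\<omega>. \<bar>\<epsilon> 2 \<omega> - \<epsilon> 1 \<omega>\<bar> \<partial>M)" by (rule integral_nonneg_AE) simp
  have "(\<integral>\<omega>. \<bar>\<epsilon> 2 \<omega> - \<epsilon> (2 - 1) \<omega>\<bar> \<partial>M) = mu" by (rule EZ) simp
  then have b: "(\<integral>\<omega>. \<bar>\<epsilon> 2 \<omega> - \<epsilon> 1 \<omega>\<bar> \<partial>M) = mu" by simp
  from n a b have "(\<integral>\<omega>. \<bar>\<epsilon> 2 \<omega> - \<epsilon> 1 \<omega>\<bar> \<partial>M) = 0" by linarith
  then have "AE \<omega> in M. \<bar>\<epsilon> 2 \<omega> - \<epsilon> 1 \<omega>\<bar> = 0"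
    using intZ[of 2] by (subst integral_nonneg_eq_0_iff_AE[symmetric]) auto
  then have ae: "AE \<omega> in M. (\<epsilon> 2 \<omega> - \<epsilon> 1 \<omega>)\<^sup>2 = 0" by eventually_elim simp
  have "(\<integral>\<omega>. (\<epsilon> 2 \<omega> - \<epsilon> 1 \<omega>)\<^sup>2 \<partial>M) = (\<integral>\<omega>. 0 \<partial>M)"
    by (rule integral_cong_AE) (use meas[of 1] meas[of 2] ae in auto)
  then have z: "(\<integral>\<omega>. (\<epsilon> 2 \<omega> - \<epsilon> 1 \<omega>)\<^sup>2 \<partial>M) = 0" by simp
  have i12: "integrable M (\<lambda>\<omega>. \<epsilon> 2 \<omega> * \<epsilon> 1 \<omega>)"
    by (rule indep_var_integrable[OF indep2 int1i int1i]) auto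
  have e12: "(\<integral>\<omega>. \<epsilon> 2 \<omega> * \<epsilon> 1 \<omega> \<partial>M) = 0"
    using indep_var_lebesgue_integral[OF indep2[of 2 1] int1i int1i] mean0i[of 1] by simp
  have "(\<lambda>\<omega>. (\<epsilon> 2 \<omega> - \<epsilon> 1 \<omega>)\<^sup>2) = (\<lambda>\<omega>. (\<epsilon> 2 \<omega>)\<^sup>2 - 2 * (\<epsilon> 2 \<omega> * \<epsilon> 1 \<omega>) + (\<epsilon> 1 \<omega>)\<^sup>2)"
    by (simp add: power2_diff fun_eq_iff)
  then have "(\<integral>\<omega>. (\<epsilon> 2 \<omega> - \<epsilon> 1 \<omega>)\<^sup>2 \<partial>M) = (\<integral>\<omega>. (\<epsilon> 2 \<omega>)\<^sup>2 \<partial>M) - 2 * (\<integral>\<omega>. \<epsilon> 2 \<omega> * \<epsilon> 1 \<omega> \<partial>M) + (\<integral>\<omega>. (\<epsilon> 1 \<omega>)\<^sup>2 \<partial>M)"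
    using int2i[of 2] int2i[of 1] i12 by simp
  then have "2 * sigma2 = 0" using z e12 mom2i[of 2] unfolding sigma2_def by simp
  then have "(\<integral>\<omega>. (\<epsilon> 1 \<omega>)\<^sup>2 \<partial>M) = 0" unfolding sigma2_def by simp
  then have "AE \<omega> in M. (\<epsilon> 1 \<omega>)\<^sup>2 = 0"
    using int2 by (subst integral_nonneg_eq_0_iff_AE[symmetric]) auto
  then have "AE \<omega> in M. \<epsilon> 1 \<omega> = 0" by eventually_elim simp
  then show False using nondeg by blast
qed

end

lemma telescope_nat:
  fixes f :: "nat \<Rightarrow> real"
  shows "n \<ge> 1 \<Longrightarrow> (\<Sum>i=2..n. f i - f (i - 1)) = f n - f 1"
proof (induction n)
  case 0 then show ?case by simp
next
  case (Suc n)
  show ?case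
  proof (cases "n = 0")
    case True then show ?thesis by simp
  next
    case False
    then have "(\<Sum>i=2..Suc n. f i - f (i - 1)) = (\<Sum>i=2..n. f i - f (i - 1)) + (f (Suc n) - f n)"
      by (simp add: sum.cl_ivl_Suc)
    also have "\<dots> = f (Suc n) - f 1" using Suc False by simp
    finally show ?thesis .
  qed
qed

lemma lipschitz_from_deriv:
  fixes h h' :: "real \<Rightarrow> real"
  assumes der: "\<forall>x\<in>{a..b}. (h has_real_derivative h' x) (at x within {a..b})"
    and L: "\<forall>x\<in>{a..b}. \<bar>h' x\<bar> \<le> L"
    and xy: "x \<in> {a..b}" "y \<in> {a..b}" "x \<le> y"
  shows "\<bar>h y - h x\<bar> \<le> L * (y - x)"
proof -
  have "\<exists>z\<in>{x..y}. h y - h x = (\<lambda>t. h' z * t) (y - x)"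
  proof (rule mvt_very_simple)
    show "x \<le> y" by fact
    fix z assume z: "x \<le> z" "z \<le> y"
    then have "z \<in> {a..b}" using xy by auto
    then have "(h has_derivative (\<lambda>t. h' z * t)) (at z within {a..b})"
      using der by (auto simp: has_field_derivative_def)
    then show "(h has_derivative (\<lambda>t. h' z * t)) (at z within {x..y})"
      by (rule has_derivative_subset) (use xy in auto)
  qed
  then obtain z where z: "z \<in> {x..y}" "h y - h x = (y - x) * h' z" by auto
  then have "z \<in> {a..b}" using xy by auto
  then have "\<bar>h' z\<bar> \<le> L" using L by auto
  then have "\<bar>y - x\<bar> * \<bar>h' z\<bar> \<le> \<bar>y - x\<bar> * L" by (intro mult_left_mono) auto
  then show ?thesis using z xy by (simp add: abs_mult mult.commute)
qed

lemma design_pt_n: "n \<ge> 2 \<Longrightarrow> design_pt a b n n = b"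
  unfolding design_pt_def by simp

lemma design_pt_1: "design_pt a b n 1 = a"
  unfolding design_pt_def by simp

lemma design_pt_in:
  assumes "a < b" "n \<ge> 2" "1 \<le> i" "i \<le> n"
  shows "design_pt a b n i \<in> {a..b}"
proof -
  have n1: "real n - 1 > 0" using assms by simp
  have "0 \<le> real i - 1" "real i - 1 \<le> real n - 1" using assms by auto
  then have "0 \<le> (real i - 1) / (real n - 1)" "(real i - 1) / (real n - 1) \<le> 1"
    using n1 by (auto simp: divide_le_eq_1)
  then have "0 \<le> (b - a) * ((real i - 1) / (real n - 1))" "(b - a) * ((real i - 1) / (real n - 1)) \<le> (b - a) * 1"
    using assms by (intro mult_nonneg_nonneg mult_left_mono; simp)+
  then show "design_pt a b n i \<in> {a..b}" unfolding design_pt_def by auto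
qed

lemma design_pt_diff:
  assumes "n \<ge> 2" "2 \<le> i"
  shows "design_pt a b n i - design_pt a b n (i - 1) = (b - a) / (real n - 1)"
proof -
  have n1: "real n - 1 > 0" using assms by simp
  have r: "real (i - 1) = real i - 1" using assms by simp
  have "design_pt a b n i - design_pt a b n (i - 1)
      = ((b - a) * (real i - 1) - (b - a) * (real i - 1 - 1)) / (real n - 1)"
    unfolding design_pt_def r by (simp add: diff_divide_distrib)
  also have "(b - a) * (real i - 1) - (b - a) * (real i - 1 - 1) = b - a" by (simp add: algebra_simps)
  finally show ?thesis .
qed

lemma pos_part_eq: "pos_part x = (\<bar>x\<bar> + x) / 2"
  unfolding pos_part_def by auto

theorem theorem5:
  fixes M :: "'a measure" and a b :: real and h h' :: "real \<Rightarrow> real"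
    and \<epsilon> :: "nat \<Rightarrow> 'a \<Rightarrow> real"
  assumes "prob_space M"
    and "a < b"
    and "\<forall>x\<in>{a..b}. (h has_real_derivative h' x) (at x within {a..b})"
    and "continuous_on {a..b} h'"
    and "bounded (h' ` {a..b})"
    and "prob_space.indep_vars M (\<lambda>_. borel) \<epsilon> {1..}"
    and "\<forall>i\<ge>1. distr M borel (\<epsilon> i) = distr M borel (\<epsilon> 1)"
    and "\<not> (\<exists>c. AE \<omega> in M. \<epsilon> 1 \<omega> = c)"
    and "integrable M (\<epsilon> 1)" and "(\<integral>\<omega>. \<epsilon> 1 \<omega> \<partial>M) = 0"
    and "integrable M (\<lambda>\<omega>. (\<epsilon> 1 \<omega>)\<^sup>2)"
  defines "Y \<equiv> \<lambda>n i \<omega>. h (design_pt a b n i) + \<epsilon> i \<omega>"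
  defines "A \<equiv> \<lambda>n \<omega>. (1 / sqrt (real n)) * (\<Sum>i=2..n. pos_part (Y n i \<omega> - Y n (i - 1) \<omega>))"
  defines "B \<equiv> \<lambda>n \<omega>. (1 / sqrt (real n)) * (\<Sum>i=2..n. \<bar>Y n i \<omega> - Y n (i - 1) \<omega>\<bar>)"
  shows "conv_in_prob M (\<lambda>n \<omega>. A n \<omega> / B n \<omega>) (1/2)"
proof -
  interpret iid_setting M \<epsilon>
    by (intro iid_setting.intro iid_setting_axioms.intro assms(1) assms(6-11))
  obtain L where L0: "\<forall>x\<in>h' ` {a..b}. norm x \<le> L" using assms(5) bounded_iff by blast
  then have Lb: "\<forall>x\<in>{a..b}. \<bar>h' x\<bar> \<le> L" by auto
  have L_nonneg: "0 \<le> L" using Lb assms(2) by (metis abs_ge_zero atLeastAtMost_iff less_imp_le order_refl order_trans)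
  define C where "C = L * (b - a)"
  have C_nonneg: "0 \<le> C" unfolding C_def using L_nonneg assms(2) by simp
  define c0 where "c0 = h b - h a"
  have hsum: "(\<Sum>i=2..n. \<bar>h (design_pt a b n i) - h (design_pt a b n (i - 1))\<bar>) \<le> C" if n: "n \<ge> 2" for n
  proof -
    have "(\<Sum>i=2..n. \<bar>h (design_pt a b n i) - h (design_pt a b n (i - 1))\<bar>) \<le> (\<Sum>i=2..n. L * ((b - a) / (real n - 1)))"
    proof (rule sum_mono)
      fix i assume i: "i \<in> {2..n}"
      have d: "design_pt a b n i - design_pt a b n (i - 1) = (b - a) / (real n - 1)"
        using design_pt_diff[OF n] i by auto
      have pos: "(b - a) / (real n - 1) \<ge> 0" using n assms(2) by simp
      show "\<bar>h (design_pt a b n i) - h (design_pt a b n (i - 1))\<bar> \<le> L * ((b - a) / (real n - 1))"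
        using lipschitz_from_deriv[OF assms(3) Lb, of "design_pt a b n (i - 1)" "design_pt a b n i"]
          design_pt_in[OF assms(2) n, of i] design_pt_in[OF assms(2) n, of "i - 1"] i d pos
        by auto
    qed
    also have "\<dots> = real (n - 1) * (L * ((b - a) / (real n - 1)))" by simp
    also have "\<dots> = C" unfolding C_def using n by (simp add: of_nat_diff)
    finally show ?thesis .
  qed
  show ?thesis
    unfolding conv_in_prob_def
  proof (intro allI impI)
    fix e :: real assume e: "e > 0"
    have mu: "mu > 0" by (rule mu_pos)
    define N1 where "N1 = nat \<lceil>4 * (mu + C) / mu\<rceil>"
    define N2 where "N2 = nat \<lceil>2 * \<bar>c0\<bar> / (e * mu)\<rceil>"
    define N where "N = max 2 (max N1 N2)"
    define g where "g n = 48 * v / mu\<^sup>2 * (1 / real n) + 32 * sigma2 / (e\<^sup>2 * mu\<^sup>2) * (1 / real n)\<^sup>2" for n :: nat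
    have g_lim: "g \<longlonglongrightarrow> 0"
    proof -
      have "(\<lambda>n. 48 * v / mu\<^sup>2 * (1 / real n)) \<longlonglongrightarrow> 0"
        by (rule tendsto_mult_right_zero) (rule lim_1_over_n)
      moreover have "(\<lambda>n. 32 * sigma2 / (e\<^sup>2 * mu\<^sup>2) * (1 / real n)\<^sup>2) \<longlonglongrightarrow> 0"
        by (rule tendsto_mult_right_zero) (use tendsto_power[OF lim_1_over_n, of 2] in \<open>unfold zero_power2\<close>)
      ultimately show ?thesis unfolding g_def by (rule tendsto_add_zero)
    qed
    have bound: "measure M {\<omega> \<in> space M. e < \<bar>A n \<omega> / B n \<omega> - 1/2\<bar>} \<le> g n" if nN: "n \<ge> N" for n
    proof -
      have n2: "n \<ge> 2" using nN unfolding N_def by auto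
      have rn: "real n > 0" using n2 by simp
      have "4 * (mu + C) / mu \<le> real N1" unfolding N1_def by (rule real_nat_ceiling_ge)
      moreover have "real N1 \<le> real n" using nN unfolding N_def by simp
      ultimately have "real n \<ge> 4 * (mu + C) / mu" by linarith
      then have c1: "real n * mu / 4 \<ge> mu + C" using mu by (simp add: field_simps)
      have "2 * \<bar>c0\<bar> / (e * mu) \<le> real N2" unfolding N2_def by (rule real_nat_ceiling_ge)
      moreover have "real N2 \<le> real n" using nN unfolding N_def by simp
      ultimately have "real n \<ge> 2 * \<bar>c0\<bar> / (e * mu)" by linarith
      then have c2: "e * real n * mu / 2 \<ge> \<bar>c0\<bar>" using mu e by (simp add: field_simps)
      define S1 where "S1 = {\<omega>\<in>space M. real n * mu / 4 \<le> \<bar>\<Sum>i\<in>{2..n}. W i \<omega>\<bar>}"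
      define S2 where "S2 = {\<omega>\<in>space M. e * real n * mu / 4 \<le> \<bar>\<epsilon> n \<omega>\<bar>}"
      define S3 where "S3 = {\<omega>\<in>space M. e * real n * mu / 4 \<le> \<bar>\<epsilon> 1 \<omega>\<bar>}"
      have [measurable]: "(\<lambda>\<omega>. \<Sum>i\<in>{2..n}. W i \<omega>) \<in> borel_measurable M"
        by (rule S_meas) auto
      have [measurable]: "\<epsilon> n \<in> borel_measurable M" "\<epsilon> 1 \<in> borel_measurable M"
        using meas n2 by auto
      have S1m: "S1 \<in> sets M" unfolding S1_def by measurable
      have S2m: "S2 \<in> sets M" unfolding S2_def by measurable
      have S3m: "S3 \<in> sets M" unfolding S3_def by measurable
      have incl: "{\<omega> \<in> space M. e < \<bar>A n \<omega> / B n \<omega> - 1/2\<bar>} \<subseteq> S1 \<union> S2 \<union> S3"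
      proof
        fix \<omega> assume om: "\<omega> \<in> {\<omega> \<in> space M. e < \<bar>A n \<omega> / B n \<omega> - 1/2\<bar>}"
        then have \<omega>M: "\<omega> \<in> space M" and big: "e < \<bar>A n \<omega> / B n \<omega> - 1/2\<bar>" by auto
        show "\<omega> \<in> S1 \<union> S2 \<union> S3"
        proof (rule ccontr)
          assume "\<omega> \<notin> S1 \<union> S2 \<union> S3"
          then have w1: "\<bar>\<Sum>i\<in>{2..n}. W i \<omega>\<bar> < real n * mu / 4"
            and w2: "\<bar>\<epsilon> n \<omega>\<bar> < e * real n * mu / 4" and w3: "\<bar>\<epsilon> 1 \<omega>\<bar> < e * real n * mu / 4"
            using \<omega>M unfolding S1_def S2_def S3_def by auto
          define c where "c i = h (design_pt a b n i) - h (design_pt a b n (i - 1))" for i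
          define d where "d i = \<epsilon> i \<omega> - \<epsilon> (i - 1) \<omega>" for i
          have D: "Y n i \<omega> - Y n (i - 1) \<omega> = c i + d i" for i unfolding Y_def c_def d_def by simp
          define T where "T = (\<Sum>i=2..n. \<bar>c i + d i\<bar>)"
          define U where "U = (\<Sum>i=2..n. c i + d i)"
          have U: "U = c0 + \<epsilon> n \<omega> - \<epsilon> 1 \<omega>"
          proof -
            have "U = (\<Sum>i=2..n. Y n i \<omega> - Y n (i - 1) \<omega>)" unfolding U_def D ..
            also have "\<dots> = Y n n \<omega> - Y n 1 \<omega>" using telescope_nat[of n "\<lambda>i. Y n i \<omega>"] n2 by simp
            also have "\<dots> = c0 + \<epsilon> n \<omega> - \<epsilon> 1 \<omega>"
              unfolding Y_def c0_def using design_pt_n[OF n2, of a b] design_pt_1[of a b n] by simp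
            finally show ?thesis .
          qed
          have SW: "(\<Sum>i\<in>{2..n}. W i \<omega>) = (\<Sum>i=2..n. \<bar>d i\<bar>) - (real n - 1) * mu"
          proof -
            have "(\<Sum>i\<in>{2..n}. W i \<omega>) = (\<Sum>i=2..n. \<bar>d i\<bar>) - (\<Sum>i=2..n. mu)"
              unfolding W_def d_def by (simp add: sum_subtractf)
            also have "(\<Sum>i=2..n. mu) = (real n - 1) * mu" using n2 by (simp add: of_nat_diff)
            finally show ?thesis .
          qed
          have TS: "T \<ge> (\<Sum>i=2..n. \<bar>d i\<bar>) - C"
          proof -
            have "(\<Sum>i=2..n. \<bar>d i\<bar> - \<bar>c i\<bar>) \<le> T"
              unfolding T_def
            proof (rule sum_mono)
              fix i show "\<bar>d i\<bar> - \<bar>c i\<bar> \<le> \<bar>c i + d i\<bar>"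
                using abs_triangle_ineq2[of "d i" "- c i"] by (simp add: add.commute)
            qed
            moreover have "(\<Sum>i=2..n. \<bar>c i\<bar>) \<le> C" unfolding c_def by (rule hsum[OF n2])
            ultimately show ?thesis by (simp add: sum_subtractf)
          qed
          have "- (\<Sum>i\<in>{2..n}. W i \<omega>) < real n * mu / 4" using w1 by (simp add: abs_less_iff)
          moreover have "(real n - 1) * mu = real n * mu - mu" by (simp add: algebra_simps)
          ultimately have Tge: "T \<ge> real n * mu / 2" using SW TS c1 by linarith
          have "real n * mu > 0" using rn mu by simp
          then have Tpos: "T > 0" using Tge by linarith
          have t1: "\<bar>c0 + \<epsilon> n \<omega> - \<epsilon> 1 \<omega>\<bar> \<le> \<bar>c0 + \<epsilon> n \<omega>\<bar> + \<bar>\<epsilon> 1 \<omega>\<bar>" by (rule abs_triangle_ineq4)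
          have t2: "\<bar>c0 + \<epsilon> n \<omega>\<bar> \<le> \<bar>c0\<bar> + \<bar>\<epsilon> n \<omega>\<bar>" by (rule abs_triangle_ineq)
          have "\<bar>U\<bar> \<le> e * (real n * mu)" unfolding U using t1 t2 c2 w2 w3 by linarith
          also have "\<dots> \<le> e * (2 * T)" using Tge e by (intro mult_left_mono) auto
          finally have Ub: "\<bar>U\<bar> \<le> e * (2 * T)" .
          have sA: "(\<Sum>i=2..n. pos_part (Y n i \<omega> - Y n (i - 1) \<omega>)) = (T + U) / 2"
            unfolding D pos_part_eq T_def U_def by (simp add: sum.distrib sum_divide_distrib[symmetric])
          have sB: "(\<Sum>i=2..n. \<bar>Y n i \<omega> - Y n (i - 1) \<omega>\<bar>) = T"
            unfolding D T_def ..
          have sq: "sqrt (real n) > 0" using rn by simp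
          have "A n \<omega> / B n \<omega> = ((1 / sqrt (real n)) * ((T + U) / 2)) / ((1 / sqrt (real n)) * T)"
            unfolding A_def B_def sA sB ..
          also have "\<dots> = 1/2 + U / (2 * T)" using sq Tpos by (simp add: field_simps)
          finally have "\<bar>A n \<omega> / B n \<omega> - 1/2\<bar> = \<bar>U\<bar> / (2 * T)" using Tpos by (simp add: abs_divide)
          also have "\<dots> \<le> e" using Ub Tpos by (simp add: pos_divide_le_eq)
          finally show False using big by simp
        qed
      qed
      have "measure M {\<omega> \<in> space M. e < \<bar>A n \<omega> / B n \<omega> - 1/2\<bar>} \<le> measure M (S1 \<union> S2 \<union> S3)"
        by (rule finite_measure_mono[OF incl]) (use S1m S2m S3m in auto)
      also have "\<dots> \<le> measure M S1 + measure M S2 + measure M S3"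
        using S1m S2m S3m by (meson add_right_mono measure_Un_le order_trans sets.Un)
      also have "\<dots> \<le> 3 * v * real (card {2..n}) / (real n * mu / 4)\<^sup>2 + sigma2 / (e * real n * mu / 4)\<^sup>2
                        + sigma2 / (e * real n * mu / 4)\<^sup>2"
      proof -
        have "measure M S1 \<le> 3 * v * real (card {2..n}) / (real n * mu / 4)\<^sup>2"
          unfolding S1_def by (rule S_tail) (use rn mu in auto)
        moreover have "measure M S2 \<le> sigma2 / (e * real n * mu / 4)\<^sup>2"
          unfolding S2_def by (rule eps_tail) (use rn mu e n2 in auto)
        moreover have "measure M S3 \<le> sigma2 / (e * real n * mu / 4)\<^sup>2"
          unfolding S3_def by (rule eps_tail) (use rn mu e in auto)
        ultimately show ?thesis by linarith
      qed
      also have "\<dots> \<le> g n"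
      proof -
        have "real (card {2..n}) \<le> real n" by simp
        then have "3 * v * real (card {2..n}) / (real n * mu / 4)\<^sup>2 \<le> 3 * v * real n / (real n * mu / 4)\<^sup>2"
          using v_nonneg by (intro divide_right_mono mult_left_mono) auto
        also have "\<dots> = 48 * v / mu\<^sup>2 * (1 / real n)"
          using rn mu by (simp add: field_simps power2_eq_square)
        finally have 1: "3 * v * real (card {2..n}) / (real n * mu / 4)\<^sup>2 \<le> 48 * v / mu\<^sup>2 * (1 / real n)" .
        have 2: "sigma2 / (e * real n * mu / 4)\<^sup>2 + sigma2 / (e * real n * mu / 4)\<^sup>2
                 = 32 * sigma2 / (e\<^sup>2 * mu\<^sup>2) * (1 / real n)\<^sup>2"
          using rn mu e by (simp add: field_simps power2_eq_square)
        show ?thesis using 1 2 unfolding g_def by linarith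
      qed
      finally show ?thesis .
    qed
    show "(\<lambda>n. measure M {\<omega> \<in> space M. e < \<bar>A n \<omega> / B n \<omega> - 1/2\<bar>}) \<longlonglongrightarrow> 0"
    proof (rule tendsto_sandwich[OF _ _ tendsto_const g_lim])
      show "\<forall>\<^sub>F n in sequentially. 0 \<le> measure M {\<omega> \<in> space M. e < \<bar>A n \<omega> / B n \<omega> - 1/2\<bar>}"
        by simp
      show "\<forall>\<^sub>F n in sequentially. measure M {\<omega> \<in> space M. e < \<bar>A n \<omega> / B n \<omega> - 1/2\<bar>} \<le> g n"
        using bound by (auto simp: eventually_sequentially)
    qed
  qed
qed

end
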